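(* Let trimming proportions satisfy instead $0\le a_i\le a_j<\bar b_i\le\bar b_j\le1$ (with $\bar v:=1-v$), and assume the integrals $\kappa_m$ below are finite. Then (i) $\zeta(a_i,\bar b_j)>0$; (iii) $0<\zeta_r\le1$; (iv) $\kappa_2(a_j,\bar b_j)\ge\zeta_r\,\kappa_1^2(a_i,\bar b_i)$; (v) for all $\sigma>0,\beta>0$, $T_2-\zeta_rT_1^2\ge0$; and, in place of the ordering in the previous case, $\kappa_m(a_i,\bar b_i)\ge\kappa_m(a_j,\bar b_j)$ for every odd positive integer $m$.
   Context: $\Delta(u):=\log(-\log u)$ for $u\in(0,1)$. For $0\le a<b\le1$, $\kappa_m(a,b):=\frac{1}{b-a}\int_a^b[\Delta(u)]^m\,du$. For indices $s,t$, $\zeta(a_s,\bar b_t):=\kappa_1^2(a_s,\bar b_s)-2\kappa_1(a_s,\bar b_s)\kappa_1(a_t,\bar b_t)+\kappa_2(a_t,\bar b_t)$, and $\zeta_r:=\zeta(a_j,\bar b_j)/\zeta(a_i,\bar b_j)$. $T_1=\log\sigma-\beta\kappa_1(a_i,\bar b_i)$, $T_2=(\log\sigma)^2-2\beta\log(\sigma)\kappa_1(a_j,\bar b_j)+\beta^2\kappa_2(a_j,\bar b_j)$. *)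

theory Defs
  imports "HOL-Analysis.Analysis"
begin

definition Delta :: "real \<Rightarrow> real" where
  "Delta u = ln (- ln u)"

definition kappa :: "nat \<Rightarrow> real \<Rightarrow> real \<Rightarrow> real" where
  "kappa m a b = (1 / (b - a)) * (LBINT u=a..b. (Delta u) ^ m)"

text \<open>zeta (a_s, bbar_s) (a_t, bbar_t), the paper's zeta(a_s, bbar_t).\<close>
definition zeta :: "real \<Rightarrow> real \<Rightarrow> real \<Rightarrow> real \<Rightarrow> real" where
  "zeta a1 b1 a2 b2 = (kappa 1 a1 b1)\<^sup>2 - 2 * kappa 1 a1 b1 * kappa 1 a2 b2 + kappa 2 a2 b2"

end

theory Submission
  imports Defs
begin

lemma reparam:
  fixes F :: "real \<Rightarrow> real" and a b :: real
  assumes ab: "a < b" and int: "set_integrable lborel {a..b} F"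
  shows "set_integrable lborel {0<..<1} (\<lambda>t. F (a + (b-a)*t))"
    and "(1/(b-a)) * (LBINT u=a..b. F u) = (LBINT t:{0<..<1}. F (a + (b-a)*t))"
proof -
  have int2: "set_integrable lborel {a<..<b} F"
    by (rule set_integrable_subset[OF int]) auto
  have ind: "indicator {a<..<b} (a + (b-a)*t) = (indicator {0<..<1} t :: real)" for t
  proof -
    have "(a + (b-a)*t \<in> {a<..<b}) = (0 < (b-a)*t \<and> (b-a)*t < (b-a)*1)"
      unfolding greaterThanLessThan_iff by argo
    also have "\<dots> = (t \<in> {0<..<1})"
      using ab by (simp add: zero_less_mult_iff mult_less_cancel_left)
    finally have "(a + (b-a)*t \<in> {a<..<b}) = (t \<in> {0<..<1})" .
    then show ?thesis by (simp add: indicator_def)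
  qed
  have c: "b - a \<noteq> 0" using ab by simp
  have I: "integrable lborel (\<lambda>x. indicator {a<..<b} x *\<^sub>R F x)"
    using int2 unfolding set_integrable_def .
  have "integrable lborel (\<lambda>t. indicator {a<..<b} (a + (b-a)*t) *\<^sub>R F (a + (b-a)*t))"
    using lborel_integrable_real_affine[OF I c, of a] by simp
  then show "set_integrable lborel {0<..<1} (\<lambda>t. F (a + (b-a)*t))"
    unfolding set_integrable_def ind .
  have "(LBINT u=a..b. F u) = (LBINT u:{a<..<b}. F u)"
    using ab by (simp add: interval_lebesgue_integral_def einterval_def greaterThanLessThan_def greaterThan_def lessThan_def Int_def)
  also have "\<dots> = \<bar>b-a\<bar> *\<^sub>R (\<integral>t. indicator {a<..<b} (a + (b-a)*t) *\<^sub>R F (a + (b-a)*t) \<partial>lborel)"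
    unfolding set_lebesgue_integral_def by (rule lborel_integral_real_affine[OF c])
  also have "\<dots> = (b-a) * (LBINT t:{0<..<1}. F (a + (b-a)*t))"
    using ab unfolding set_lebesgue_integral_def ind by simp
  finally show "(1/(b-a)) * (LBINT u=a..b. F u) = (LBINT t:{0<..<1}. F (a + (b-a)*t))"
    using ab by simp
qed

lemma Delta_strict: "0 < x \<Longrightarrow> x < y \<Longrightarrow> y < 1 \<Longrightarrow> Delta y < Delta x"
  unfolding Delta_def
proof -
  assume h: "0 < x" "x < y" "y < 1"
  have "ln x < ln y" using h by simp
  moreover have "ln y < 0" using h by simp
  ultimately show "ln (- ln y) < ln (- ln x)" by simp
qed

lemma Delta_mono: "0 < x \<Longrightarrow> x \<le> y \<Longrightarrow> y < 1 \<Longrightarrow> Delta y \<le> Delta x"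
  using Delta_strict by (cases "x = y") (auto simp: less_le)


lemma const_int: "set_integrable lborel {0<..<1::real} (\<lambda>_. c::real)"
  unfolding set_integrable_def
  by (rule integrable_scaleR_left, rule integrable_real_indicator) auto

lemma pos_helper:
  fixes h :: "real \<Rightarrow> real"
  assumes hi: "set_integrable lborel {0<..<1} h" and hn: "\<And>t. t\<in>{0<..<1} \<Longrightarrow> h t \<ge> 0"
    and pq: "0<p" "p<q" "q<1" and he: "\<And>t. t\<in>{p..q} \<Longrightarrow> h t \<ge> e" and e: "e>0"
  shows "(LBINT t:{0<..<1}. h t) > 0"
proof -
  have "0 < e * (q - p)" using e pq by simp
  also have "e * (q - p) = (LBINT t:{p..q}. e)"
    using pq by (simp add: set_integral_const)
  also have "\<dots> \<le> (LBINT t:{0<..<1}. h t)"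
    unfolding set_lebesgue_integral_def
  proof (rule integral_mono)
    show "integrable lborel (\<lambda>x. indicat_real {p..q} x *\<^sub>R e)"
      using pq by (intro integrable_scaleR_left integrable_real_indicator) auto
    show "integrable lborel (\<lambda>x. indicat_real {0<..<1} x *\<^sub>R h x)"
      using hi unfolding set_integrable_def .
    fix t
    show "indicat_real {p..q} t *\<^sub>R e \<le> indicat_real {0<..<1} t *\<^sub>R h t"
    proof (cases "t \<in> {p..q}")
      case True
      then have "t \<in> {0<..<1}" using pq by auto
      then show ?thesis using True he[OF True] by simp
    next
      case False
      then show ?thesis using hn[of t] by (auto simp: indicator_def)
    qed
  qed
  finally show ?thesis .
qed

lemma cs_ineq:
  fixes V d y z :: real
  assumes "V > 0"
  shows "V / (V + d^2) * (y - z*d)^2 \<le> y^2 + z^2 * V"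
proof -
  have pos: "V + d^2 > 0" using assms by (simp add: add_pos_nonneg)
  have "(V + d^2) * (y^2 + z^2*V) - V * (y - z*d)^2 = (d*y + z*V)^2"
    by (simp add: power2_eq_square algebra_simps)
  then have "V * (y - z*d)^2 \<le> (V + d^2) * (y^2 + z^2*V)"
    by (smt (verit) zero_le_power2)
  then show ?thesis using pos by (simp add: divide_le_eq mult.commute)
qed

theorem corollary3:
  fixes ai aj bi bj :: real
  assumes ord: "0 \<le> ai" "ai \<le> aj" "aj < 1 - bi" "1 - bi \<le> 1 - bj" "1 - bj \<le> 1"
    and fin_i: "\<And>m. set_integrable lborel {ai..1 - bi} (\<lambda>u. (Delta u) ^ m)"
    and fin_j: "\<And>m. set_integrable lborel {aj..1 - bj} (\<lambda>u. (Delta u) ^ m)"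
  defines "zr \<equiv> zeta aj (1 - bj) aj (1 - bj) / zeta ai (1 - bi) aj (1 - bj)"
  shows "zeta ai (1 - bi) aj (1 - bj) > 0
    \<and> (0 < zr \<and> zr \<le> 1)
    \<and> kappa 2 aj (1 - bj) \<ge> zr * (kappa 1 ai (1 - bi))\<^sup>2
    \<and> (\<forall>\<sigma>>0. \<forall>\<beta>>0.
         (ln \<sigma>)\<^sup>2 - 2 * \<beta> * ln \<sigma> * kappa 1 aj (1 - bj) + \<beta>\<^sup>2 * kappa 2 aj (1 - bj)
         - zr * (ln \<sigma> - \<beta> * kappa 1 ai (1 - bi))\<^sup>2 \<ge> 0)
    \<and> (\<forall>m. odd m \<longrightarrow> kappa m ai (1 - bi) \<ge> kappa m aj (1 - bj))"
proof -
  define Bi where "Bi = 1 - bi"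
  define Bj where "Bj = 1 - bj"
  have abi: "ai < Bi" and abj: "aj < Bj" using ord unfolding Bi_def Bj_def by auto
  define gi where "gi t = Delta (ai + (Bi - ai) * t)" for t
  define gj where "gj t = Delta (aj + (Bj - aj) * t)" for t
  have Ki: "kappa m ai Bi = (LBINT t:{0<..<1}. gi t ^ m)" for m
    unfolding kappa_def gi_def using reparam(2)[OF abi fin_i[folded Bi_def]] by simp
  have Kj: "kappa m aj Bj = (LBINT t:{0<..<1}. gj t ^ m)" for m
    unfolding kappa_def gj_def using reparam(2)[OF abj fin_j[folded Bj_def]] by simp
  have Ii: "set_integrable lborel {0<..<1} (\<lambda>t. gi t ^ m)" for m
    unfolding gi_def using reparam(1)[OF abi fin_i[folded Bi_def]] by simp
  have Ij: "set_integrable lborel {0<..<1} (\<lambda>t. gj t ^ m)" for m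
    unfolding gj_def using reparam(1)[OF abj fin_j[folded Bj_def]] by simp
  have oddm: "kappa m ai Bi \<ge> kappa m aj Bj" if "odd m" for m
    unfolding Ki Kj
  proof (rule set_integral_mono[OF Ij Ii])
    fix t :: real assume t: "t \<in> {0<..<1}"
    have x1: "0 < ai + (Bi - ai) * t" using t abi ord by (simp add: add_nonneg_pos)
    have "aj + (Bj - aj) * t < aj + (Bj - aj) * 1"
      using t abj by (intro add_strict_left_mono mult_strict_left_mono) auto
    then have x2: "aj + (Bj - aj) * t < 1" using ord unfolding Bj_def by simp
    have "(aj + (Bj - aj) * t) - (ai + (Bi - ai) * t) = (1 - t) * (aj - ai) + t * (Bj - Bi)"
      by (simp add: algebra_simps)
    also have "\<dots> \<ge> 0" using t ord unfolding Bi_def Bj_def by (intro add_nonneg_nonneg mult_nonneg_nonneg) auto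
    finally have "gj t \<le> gi t" unfolding gi_def gj_def using x1 x2 by (intro Delta_mono) auto
    then show "gj t ^ m \<le> gi t ^ m" using that by (simp add: power_mono_odd)
  qed
  define c where "c = kappa 1 aj Bj"
  define k2 where "k2 = kappa 2 aj Bj"
  define k1 where "k1 = kappa 1 ai Bi"
  have gstrict: "gj t < gj s" if "0 < s" "s < t" "t < 1" for s t
    unfolding gj_def
  proof (rule Delta_strict)
    show "0 < aj + (Bj - aj) * s" using that abj ord by (simp add: add_nonneg_pos)
    show "aj + (Bj - aj) * s < aj + (Bj - aj) * t" using that abj by simp
    have "aj + (Bj - aj) * t < aj + (Bj - aj) * 1"
      using that abj by (intro add_strict_left_mono mult_strict_left_mono) auto
    then show "aj + (Bj - aj) * t < 1" using ord unfolding Bj_def by simp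
  qed
  have I1: "set_integrable lborel {0<..<1} gj" using Ij[of 1] by simp
  have I2: "set_integrable lborel {0<..<1} (\<lambda>t. gj t ^ 2)" using Ij[of 2] .
  have Ih: "set_integrable lborel {0<..<1} (\<lambda>t. gj t ^ 2 + ((-2*c) * gj t + c^2))"
    by (intro set_integral_add(1) I2 set_integrable_mult_right I1 const_int)
  have eqh: "(\<lambda>t. (gj t - c)^2) = (\<lambda>t. gj t ^ 2 + ((-2*c) * gj t + c^2))"
    by (auto simp: power2_eq_square algebra_simps)
  have Sval: "(LBINT t:{0<..<1}. (gj t - c)^2) = k2 - c^2"
  proof -
    have "(LBINT t:{0<..<1}. (gj t - c)^2) = (LBINT t:{0<..<1}. gj t ^ 2) + ((-2*c) * (LBINT t:{0<..<1}. gj t) + c^2)"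
      unfolding eqh
    proof -
      have a1: "(LBINT t:{0<..<1}. gj t ^ 2 + ((-2*c) * gj t + c^2)) = (LBINT t:{0<..<1}. gj t ^ 2) + (LBINT t:{0<..<1}. (-2*c) * gj t + c^2)"
        by (rule set_integral_add(2)[OF I2]) (intro set_integral_add(1) set_integrable_mult_right I1 const_int)
      have a2: "(LBINT t:{0<..<1}. (-2*c) * gj t + c^2) = (LBINT t:{0<..<1}. (-2*c) * gj t) + (LBINT t:{0<..<1::real}. c^2)"
        by (rule set_integral_add(2)[where f="\<lambda>t. (-2*c) * gj t" and g="\<lambda>_. c^2"]) (intro set_integrable_mult_right I1 const_int)+
      have a3: "(LBINT t:{0<..<1}. (-2*c) * gj t) = (-2*c) * (LBINT t:{0<..<1}. gj t)"
        by (rule set_integral_mult_right)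
      have a4: "(LBINT t:{0<..<1::real}. c^2) = c^2"
        by (simp add: set_integral_const)
      show "(LBINT t:{0<..<1}. gj t ^ 2 + ((-2*c) * gj t + c^2)) = (LBINT t:{0<..<1}. gj t ^ 2) + ((-2*c) * (LBINT t:{0<..<1}. gj t) + c^2)"
        unfolding a1 a2 a3 a4 ..
    qed
    also have "\<dots> = k2 - c^2"
      using Kj[of 1] Kj[of 2] unfolding c_def k2_def by (simp add: power2_eq_square)
    finally show ?thesis .
  qed
  have Spos: "(LBINT t:{0<..<1}. (gj t - c)^2) > 0"
  proof (cases "c \<ge> gj (1/2)")
    case True
    show ?thesis
    proof (rule pos_helper[where p="3/4" and q="7/8" and e="(gj (1/2) - gj (3/4))^2"])
      show "set_integrable lborel {0<..<1} (\<lambda>t. (gj t - c)^2)" unfolding eqh by (rule Ih)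
      show "0 < (gj (1/2) - gj (3/4))^2" using gstrict[of "1/2" "3/4"] by simp
      fix t :: real assume t: "t \<in> {3/4..7/8}"
      have "gj t \<le> gj (3/4)" proof (cases "t = 3/4")
        case False then show ?thesis using gstrict[of "3/4" t] t by auto
      qed (metis order_refl)
      then have "gj (1/2) - gj (3/4) \<le> c - gj t" using True by simp
      moreover have "0 \<le> gj (1/2) - gj (3/4)" using gstrict[of "1/2" "3/4"] by simp
      ultimately have "(gj (1/2) - gj (3/4))^2 \<le> (c - gj t)^2" by (rule power_mono)
      then show "(gj (1/2) - gj (3/4))^2 \<le> (gj t - c)^2" by (simp add: power2_commute)
    qed auto
  next
    case False
    show ?thesis
    proof (rule pos_helper[where p="1/8" and q="1/4" and e="(gj (1/4) - gj (1/2))^2"])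
      show "set_integrable lborel {0<..<1} (\<lambda>t. (gj t - c)^2)" unfolding eqh by (rule Ih)
      show "0 < (gj (1/4) - gj (1/2))^2" using gstrict[of "1/4" "1/2"] by simp
      fix t :: real assume t: "t \<in> {1/8..1/4}"
      have "gj t \<ge> gj (1/4)" proof (cases "t = 1/4")
        case False then show ?thesis using gstrict[of t "1/4"] t by auto
      qed (metis order_refl)
      then have "gj (1/4) - gj (1/2) \<le> gj t - c" using False by simp
      moreover have "0 \<le> gj (1/4) - gj (1/2)" using gstrict[of "1/4" "1/2"] by simp
      ultimately show "(gj (1/4) - gj (1/2))^2 \<le> (gj t - c)^2" by (rule power_mono)
    qed auto
  qed
  define V where "V = k2 - c^2"
  define d where "d = k1 - c"
  have V: "V > 0" using Spos Sval V_def by simp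
  have zij: "zeta ai Bi aj Bj = V + d^2"
    unfolding zeta_def V_def d_def k1_def c_def k2_def by (simp add: power2_eq_square algebra_simps)
  have zjj: "zeta aj Bj aj Bj = V"
    unfolding zeta_def V_def c_def k2_def by (simp add: power2_eq_square algebra_simps)
  have pos: "V + d^2 > 0" using V by (simp add: add_pos_nonneg)
  have zr: "zr = V / (V + d^2)" unfolding zr_def using zij zjj Bi_def Bj_def by simp
  have p1: "zeta ai (1 - bi) aj (1 - bj) > 0" using zij pos Bi_def Bj_def by simp
  have p2: "0 < zr \<and> zr \<le> 1" unfolding zr using V pos by (simp add: divide_le_eq)
  have p3: "kappa 2 aj (1 - bj) \<ge> zr * (kappa 1 ai (1 - bi))\<^sup>2"
  proof -
    have "zr * k1^2 \<le> (c - 0)^2 + 0^2 * V + V"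
      using cs_ineq[OF V, of d "c" "-1"] unfolding zr d_def by (simp add: algebra_simps)
    then show ?thesis unfolding k1_def Bi_def Bj_def[symmetric] using V_def k2_def by simp
  qed
  have p4: "\<forall>\<sigma>>0. \<forall>\<beta>>0.
         (ln \<sigma>)\<^sup>2 - 2 * \<beta> * ln \<sigma> * kappa 1 aj (1 - bj) + \<beta>\<^sup>2 * kappa 2 aj (1 - bj)
         - zr * (ln \<sigma> - \<beta> * kappa 1 ai (1 - bi))\<^sup>2 \<ge> 0"
  proof (intro allI impI)
    fix \<sigma> \<beta> :: real
    define x where "x = ln \<sigma>"
    have h: "zr * ((x - \<beta>*c) - \<beta>*d)^2 \<le> (x - \<beta>*c)^2 + \<beta>^2 * V"
      unfolding zr by (rule cs_ineq[OF V])
    have e1: "(x - \<beta>*c) - \<beta>*d = x - \<beta> * k1" unfolding d_def by (simp add: algebra_simps)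
    have e2: "(x - \<beta>*c)^2 + \<beta>^2 * V = x^2 - 2*\<beta>*x*c + \<beta>^2 * k2"
      unfolding V_def by (simp add: power2_eq_square algebra_simps)
    show "(ln \<sigma>)\<^sup>2 - 2 * \<beta> * ln \<sigma> * kappa 1 aj (1 - bj) + \<beta>\<^sup>2 * kappa 2 aj (1 - bj)
         - zr * (ln \<sigma> - \<beta> * kappa 1 ai (1 - bi))\<^sup>2 \<ge> 0"
    proof -
      have "zr * (x - \<beta> * k1)^2 \<le> x^2 - 2*\<beta>*x*c + \<beta>^2 * k2"
        using h by (simp only: e1 e2)
      then show ?thesis unfolding x_def c_def k1_def k2_def Bi_def Bj_def by simp
    qed
  qed
  have p5: "\<forall>m. odd m \<longrightarrow> kappa m ai (1 - bi) \<ge> kappa m aj (1 - bj)"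
    using oddm unfolding Bi_def Bj_def by simp
  show ?thesis using p1 p2 p3 p4 p5 by blast
qed

end
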